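(* Let $P=\{p_1,\dots,p_n\}$ be weighted points in $\mathbb{R}^d$ with total weight $1$, let $S=\{s_1,\dots,s_m\}$ be $d$-dimensional simplices in $\mathbb{R}^d$ of total volume $1$ with longest edge length $\Delta$, let $\delta>0$, and let $Q$ be the set of cells produced by the subdivision in the context. Then $|Q|=O\!\left(\frac{5^d\,d\,d^{d/2}\,nm}{\delta^d}\log\frac{(nm)^{1/d}\Delta}{\delta}\right)$.
   Context: Subdivision: overlay a uniform grid of cubes of side $\Delta$ and keep the cells intersected by some simplex of $S$. Repeatedly subdivide each cell into $2^d$ equal subcubes until, for every point of $P$, the ratio of the Euclidean distances to the furthest and closest point of the cell is at most $1+\delta$, or until the cell lies wholly within distance $\delta/(nm)^{1/d}$ of some point of $P$. $Q$ is the set of resulting cells. *)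

theory Defs
  imports "HOL-Probability.Probability"
begin

text \<open>Explicit d-dimensional Euclidean space: points are extensional functions
  on the index set {..<d}.\<close>

definition RR :: "nat \<Rightarrow> (nat \<Rightarrow> real) set" where
  "RR d = PiE {..<d} (\<lambda>_. UNIV)"

definition edist :: "nat \<Rightarrow> (nat \<Rightarrow> real) \<Rightarrow> (nat \<Rightarrow> real) \<Rightarrow> real" where
  "edist d x y = sqrt (\<Sum>i<d. (x i - y i)^2)"

definition leb :: "nat \<Rightarrow> (nat \<Rightarrow> real) measure" where
  "leb d = PiM {..<d} (\<lambda>_. lborel)"

definition dcube :: "nat \<Rightarrow> (nat \<Rightarrow> real) \<Rightarrow> real \<Rightarrow> (nat \<Rightarrow> real) set" where
  "dcube d a s = PiE {..<d} (\<lambda>i. {a i .. a i + s})"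

definition dsimplex :: "nat \<Rightarrow> (nat \<Rightarrow> nat \<Rightarrow> real) \<Rightarrow> (nat \<Rightarrow> real) set" where
  "dsimplex d v = {x. x \<in> RR d \<and> (\<exists>l. (\<forall>j\<le>d. 0 \<le> l j) \<and> (\<Sum>j\<le>d. l j) = 1
      \<and> (\<forall>i<d. x i = (\<Sum>j\<le>d. l j * v j i)))}"

definition aff_indep :: "nat \<Rightarrow> (nat \<Rightarrow> nat \<Rightarrow> real) \<Rightarrow> bool" where
  "aff_indep d v \<longleftrightarrow> (\<forall>c. (\<forall>i<d. (\<Sum>j\<in>{1..d}. c j * (v j i - v 0 i)) = 0)
      \<longrightarrow> (\<forall>j\<in>{1..d}. c j = 0))"

text \<open>Stopping criterion for a cell (a, s): for every point p_k, the ratio of the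
  distances to the furthest and closest point of the cell is at most 1+delta
  (written multiplicatively; a closest distance 0 means ratio infinity),
  or the cell lies wholly within distance delta/(nm)^(1/d) of some point.\<close>
definition stop_cell :: "nat \<Rightarrow> real \<Rightarrow> nat \<Rightarrow> nat \<Rightarrow> (nat \<Rightarrow> nat \<Rightarrow> real)
    \<Rightarrow> (nat \<Rightarrow> real) \<times> real \<Rightarrow> bool" where
  "stop_cell d \<delta> n m p c \<longleftrightarrow>
     (\<forall>k<n. (SUP x\<in>dcube d (fst c) (snd c). edist d (p k) x)
              \<le> (1 + \<delta>) * (INF x\<in>dcube d (fst c) (snd c). edist d (p k) x))
   \<or> (\<exists>k<n. \<forall>x\<in>dcube d (fst c) (snd c).
              edist d (p k) x \<le> \<delta> / (real (n * m)) powr (1 / real d))"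

inductive reached :: "nat \<Rightarrow> real \<Rightarrow> real \<Rightarrow> nat \<Rightarrow> nat \<Rightarrow> (nat \<Rightarrow> nat \<Rightarrow> real)
    \<Rightarrow> (nat \<Rightarrow> nat \<Rightarrow> nat \<Rightarrow> real) \<Rightarrow> (nat \<Rightarrow> real) \<times> real \<Rightarrow> bool"
  for d \<Delta> \<delta> n m p V where
  init: "a \<in> RR d \<Longrightarrow> (\<forall>i<d. \<exists>z::int. a i = of_int z * \<Delta>)
     \<Longrightarrow> (\<exists>k<m. dcube d a \<Delta> \<inter> dsimplex d (V k) \<noteq> {})
     \<Longrightarrow> reached d \<Delta> \<delta> n m p V (a, \<Delta>)"
| sub: "reached d \<Delta> \<delta> n m p V (a, s) \<Longrightarrow> \<not> stop_cell d \<delta> n m p (a, s)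
     \<Longrightarrow> b \<in> RR d \<Longrightarrow> (\<forall>i<d. b i = a i \<or> b i = a i + s / 2)
     \<Longrightarrow> reached d \<Delta> \<delta> n m p V (b, s / 2)"

definition cells_Q :: "nat \<Rightarrow> real \<Rightarrow> real \<Rightarrow> nat \<Rightarrow> nat \<Rightarrow> (nat \<Rightarrow> nat \<Rightarrow> real)
    \<Rightarrow> (nat \<Rightarrow> nat \<Rightarrow> nat \<Rightarrow> real) \<Rightarrow> ((nat \<Rightarrow> real) \<times> real) set" where
  "cells_Q d \<Delta> \<delta> n m p V = {c. reached d \<Delta> \<delta> n m p V c \<and> stop_cell d \<delta> n m p c}"

end

theory Submission
  imports Defs
begin


lemma box_measure:
  assumes "\<And>i. i < d \<Longrightarrow> lo i \<le> hi i"
  shows "emeasure (leb d) (PiE {..<d} (\<lambda>i. {lo i .. hi i})) = ennreal (\<Prod>i<d. hi i - lo i)"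
proof -
  interpret product_sigma_finite "\<lambda>_::nat. lborel"
    by (simp add: product_sigma_finite_def lborel.sigma_finite_measure_axioms)
  have "emeasure (leb d) (PiE {..<d} (\<lambda>i. {lo i .. hi i})) = (\<Prod>i<d. emeasure lborel {lo i .. hi i})"
    unfolding leb_def by (rule emeasure_PiM) auto
  also have "\<dots> = (\<Prod>i<d. ennreal (hi i - lo i))"
    using assms by (intro prod.cong) auto
  also have "\<dots> = ennreal (\<Prod>i<d. hi i - lo i)"
    by (rule prod_ennreal) (use assms in auto)
  finally show ?thesis .
qed

lemma box_sets: "PiE {..<d} (\<lambda>i. {lo i .. hi i::real}) \<in> sets (leb d)"
  unfolding leb_def by (rule sets_PiM_I_finite) auto

lemma measure_le_box:
  assumes "S \<subseteq> PiE {..<d} (\<lambda>i. {lo i .. lo i + D})" "D \<ge> 0"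
  shows "measure (leb d) S \<le> D ^ d"
proof (cases "S \<in> sets (leb d)")
  case False
  then show ?thesis using assms by (simp add: measure_notin_sets)
next
  case True
  let ?B = "PiE {..<d} (\<lambda>i. {lo i .. lo i + D})"
  have e: "emeasure (leb d) ?B = ennreal (D ^ d)"
    using box_measure[of d lo "\<lambda>i. lo i + D"] assms by simp
  have "?B \<in> fmeasurable (leb d)"
    using e box_sets[of d lo "\<lambda>i. lo i + D"] by (simp add: fmeasurable_def)
  then have "measure (leb d) S \<le> measure (leb d) ?B"
    using True assms by (intro measure_mono_fmeasurable) auto
  also have "\<dots> = D ^ d" using e assms by (simp add: measure_def)
  finally show ?thesis .
qed

lemma edist_L2: "edist d x y = L2_set (\<lambda>i. x i - y i) {..<d}"
  by (simp add: edist_def L2_set_def)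

lemma edist_triangle: "edist d x z \<le> edist d x y + edist d y z"
proof -
  have "edist d x z = L2_set (\<lambda>i. (x i - y i) + (y i - z i)) {..<d}"
    by (simp add: edist_L2)
  also have "\<dots> \<le> edist d x y + edist d y z"
    unfolding edist_L2 by (rule L2_set_triangle_ineq)
  finally show ?thesis .
qed

lemma edist_nonneg: "edist d x y \<ge> 0"
  by (simp add: edist_def sum_nonneg)

lemma edist_sym: "edist d x y = edist d y x"
  by (simp add: edist_def power2_commute)

lemma coord_le_edist:
  assumes "i < d" shows "\<bar>x i - y i\<bar> \<le> edist d x y"
proof -
  have "(x i - y i)^2 \<le> (\<Sum>j<d. (x j - y j)^2)"
    using assms by (intro member_le_sum) auto
  then have "sqrt ((x i - y i)^2) \<le> edist d x y"
    unfolding edist_def by (rule real_sqrt_le_mono)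
  then show ?thesis by simp
qed

lemma edist_cube:
  assumes "x \<in> dcube d a s" "y \<in> dcube d a s" "s \<ge> 0"
  shows "edist d x y \<le> s * sqrt d"
proof -
  have "(\<Sum>i<d. (x i - y i)^2) \<le> (\<Sum>i<d. s^2)"
  proof (intro sum_mono)
    fix i assume "i \<in> {..<d}"
    then have "a i \<le> x i \<and> x i \<le> a i + s" "a i \<le> y i \<and> y i \<le> a i + s"
      using assms by (auto simp: dcube_def PiE_iff)
    then have "\<bar>x i - y i\<bar> \<le> s" by (simp add: abs_le_iff)
    then show "(x i - y i)^2 \<le> s^2"
      by (metis abs_ge_zero abs_le_square_iff abs_of_nonneg assms(3))
  qed
  then have "edist d x y \<le> sqrt (real d * s^2)" unfolding edist_def
    by (intro real_sqrt_le_mono) simp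
  also have "\<dots> = s * sqrt d" using assms by (simp add: real_sqrt_mult)
  finally show ?thesis .
qed

lemma cube_ne: "a \<in> RR d \<Longrightarrow> s \<ge> 0 \<Longrightarrow> a \<in> dcube d a s"
  by (auto simp: RR_def dcube_def PiE_iff)

lemma sup_le_inf:
  assumes "a \<in> RR d" "s \<ge> 0"
  shows "bdd_above ((\<lambda>x. edist d q x) ` dcube d a s)"
    and "bdd_below ((\<lambda>x. edist d q x) ` dcube d a s)"
    and "(SUP x\<in>dcube d a s. edist d q x) \<le> (INF x\<in>dcube d a s. edist d q x) + s * sqrt d"
proof -
  let ?K = "dcube d a s"
  have ne: "?K \<noteq> {}" using cube_ne[OF assms] by auto
  have key: "edist d q x \<le> edist d q y + s * sqrt d" if "x \<in> ?K" "y \<in> ?K" for x y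
    using edist_triangle[of d q x y] edist_cube[OF that(2,1) assms(2)] edist_sym[of d y x] by linarith
  show ba: "bdd_above ((\<lambda>x. edist d q x) ` ?K)"
    using key cube_ne[OF assms] by (intro bdd_aboveI2) blast
  show bb: "bdd_below ((\<lambda>x. edist d q x) ` ?K)"
    using edist_nonneg by (intro bdd_belowI2) blast
  have "(SUP x\<in>?K. edist d q x) - s * sqrt d \<le> edist d q y" if "y \<in> ?K" for y
  proof -
    have "(SUP x\<in>?K. edist d q x) \<le> edist d q y + s * sqrt d"
      using key that ne by (intro cSUP_least) auto
    then show ?thesis by simp
  qed
  then have "(SUP x\<in>?K. edist d q x) - s * sqrt d \<le> (INF x\<in>?K. edist d q x)"
    using ne by (intro cINF_greatest) auto
  then show "(SUP x\<in>?K. edist d q x) \<le> (INF x\<in>?K. edist d q x) + s * sqrt d" by simp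
qed

lemma small_stop:
  assumes "a \<in> RR d" "s \<ge> 0" "\<delta> > 0"
    and small: "s * sqrt d * (1 + \<delta>) \<le> \<delta> * (\<delta> / (real (n * m)) powr (1 / real d))"
  shows "stop_cell d \<delta> n m p (a, s)"
proof -
  let ?K = "dcube d a s"
  let ?e = "\<delta> / (real (n * m)) powr (1 / real d)"
  have ne: "?K \<noteq> {}" using cube_ne[OF assms(1,2)] by auto
  show ?thesis
  proof (cases "\<exists>k<n. \<forall>x\<in>?K. edist d (p k) x \<le> ?e")
    case True then show ?thesis by (simp add: stop_cell_def)
  next
    case False
    have "(SUP x\<in>?K. edist d (p k) x) \<le> (1 + \<delta>) * (INF x\<in>?K. edist d (p k) x)" if k: "k < n" for k
    proof -
      obtain x0 where x0: "x0 \<in> ?K" "edist d (p k) x0 > ?e" using False k by force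
      have "edist d (p k) x \<ge> ?e - s * sqrt d" if "x \<in> ?K" for x
        using edist_triangle[of d "p k" x0 x] edist_cube[OF that x0(1) assms(2)] x0(2) by linarith
      then have I: "?e - s * sqrt d \<le> (INF x\<in>?K. edist d (p k) x)"
        using ne by (intro cINF_greatest) auto
      have "s * sqrt d * (1 + \<delta>) \<le> \<delta> * ?e" by (rule small)
      then have "s * sqrt d \<le> \<delta> * (?e - s * sqrt d)" by (simp add: algebra_simps)
      also have "\<dots> \<le> \<delta> * (INF x\<in>?K. edist d (p k) x)"
        using I assms(3) by (intro mult_left_mono) auto
      finally show ?thesis using sup_le_inf(3)[OF assms(1,2), of "p k"] by (simp add: algebra_simps)
    qed
    then show ?thesis by (simp add: stop_cell_def)
  qed
qed

lemma nonstop_near: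
  assumes "a \<in> RR d" "s \<ge> 0" "\<delta> > 0" "\<not> stop_cell d \<delta> n m p (a, s)"
  shows "\<exists>k<n. \<exists>x\<in>dcube d a s. edist d (p k) x < s * sqrt d / \<delta>"
proof -
  let ?K = "dcube d a s"
  have ne: "?K \<noteq> {}" using cube_ne[OF assms(1,2)] by auto
  obtain k where k: "k < n" "(SUP x\<in>?K. edist d (p k) x) > (1 + \<delta>) * (INF x\<in>?K. edist d (p k) x)"
    using assms(4) by (auto simp: stop_cell_def not_le)
  have "\<delta> * (INF x\<in>?K. edist d (p k) x) < s * sqrt d"
    using k(2) sup_le_inf(3)[OF assms(1,2), of "p k"] by (simp add: algebra_simps)
  then have "(INF x\<in>?K. edist d (p k) x) < s * sqrt d / \<delta>"
    using assms(3) by (simp add: field_simps)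
  then obtain x where "x \<in> ?K" "edist d (p k) x < s * sqrt d / \<delta>"
    using cINF_less_iff[OF ne sup_le_inf(2)[OF assms(1,2)]] by blast
  then show ?thesis using k(1) by blast
qed

lemma reached_level:
  "reached d \<Delta> \<delta> n m p V c \<Longrightarrow> \<exists>k::nat. snd c = \<Delta> / 2^k \<and> fst c \<in> RR d
     \<and> (\<forall>i<d. \<exists>z::int. fst c i = of_int z * snd c)"
proof (induction rule: reached.induct)
  case (init a)
  then show ?case by (intro exI[of _ 0]) auto
next
  case (sub a s b)
  obtain k where k: "s = \<Delta> / 2^k" "\<forall>i<d. \<exists>z::int. a i = of_int z * s"
  proof -
    have "\<exists>k::nat. s = \<Delta> / 2^k \<and> (\<forall>i<d. \<exists>z::int. a i = of_int z * s)" using sub.IH by simp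
    then show ?thesis using that by blast
  qed
  have "\<exists>z::int. b i = of_int z * (s / 2)" if i: "i < d" for i
  proof -
    obtain z where z: "a i = of_int z * s" using k i by blast
    show ?thesis
    proof (cases "b i = a i")
      case True then show ?thesis using z by (intro exI[of _ "2*z"]) simp
    next
      case False then have "b i = a i + s / 2" using sub i by blast
      then show ?thesis using z by (intro exI[of _ "2*z+1"]) (simp add: algebra_simps)
    qed
  qed
  then show ?case using sub k by (intro exI[of _ "Suc k"]) auto
qed

definition latt :: "real \<Rightarrow> real \<Rightarrow> real \<Rightarrow> real set" where
  "latt t lo hi = {x. \<exists>z::int. x = of_int z * t \<and> lo \<le> x \<and> x \<le> hi}"

lemma latt_card:
  assumes "t > 0" "lo \<le> hi"
  shows "finite (latt t lo hi)" "real (card (latt t lo hi)) \<le> (hi - lo) / t + 1"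
proof -
  have eq: "latt t lo hi = (\<lambda>z. of_int z * t) ` {\<lceil>lo / t\<rceil>..\<lfloor>hi / t\<rfloor>}"
  proof (intro set_eqI iffI)
    fix x assume "x \<in> latt t lo hi"
    then obtain z where z: "x = of_int z * t" "lo \<le> x" "x \<le> hi" by (auto simp: latt_def)
    have "lo / t \<le> of_int z" "of_int z \<le> hi / t" using z assms by (auto simp: field_simps)
    then have "z \<in> {\<lceil>lo / t\<rceil>..\<lfloor>hi / t\<rfloor>}" by (simp add: ceiling_le_iff le_floor_iff)
    then show "x \<in> (\<lambda>z. of_int z * t) ` {\<lceil>lo / t\<rceil>..\<lfloor>hi / t\<rfloor>}" using z by auto
  next
    fix x assume "x \<in> (\<lambda>z. of_int z * t) ` {\<lceil>lo / t\<rceil>..\<lfloor>hi / t\<rfloor>}"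
    then obtain z where zz: "z \<in> {\<lceil>lo / t\<rceil>..\<lfloor>hi / t\<rfloor>}" "x = of_int z * t" by (rule imageE)
    then have z: "x = of_int z * t" "\<lceil>lo / t\<rceil> \<le> z" "z \<le> \<lfloor>hi / t\<rfloor>" by auto
    then have "lo / t \<le> of_int z" "of_int z \<le> hi / t" by (auto simp: ceiling_le_iff le_floor_iff)
    then show "x \<in> latt t lo hi" using z assms by (auto simp: latt_def field_simps)
  qed
  show "finite (latt t lo hi)" unfolding eq by simp
  have "card (latt t lo hi) \<le> card {\<lceil>lo / t\<rceil>..\<lfloor>hi / t\<rfloor>}" unfolding eq by (rule card_image_le) simp
  also have "\<dots> = nat (\<lfloor>hi / t\<rfloor> + 1 - \<lceil>lo / t\<rceil>)" by simp
  finally have c: "real (card (latt t lo hi)) \<le> real (nat (\<lfloor>hi / t\<rfloor> + 1 - \<lceil>lo / t\<rceil>))" by simp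
  have "real_of_int (\<lfloor>hi / t\<rfloor> + 1 - \<lceil>lo / t\<rceil>) \<le> hi / t + 1 - lo / t"
    using of_int_floor_le[of "hi/t"] le_of_int_ceiling[of "lo/t"] by linarith
  also have "\<dots> = (hi - lo) / t + 1" by (simp add: diff_divide_distrib)
  finally have "real (nat (\<lfloor>hi / t\<rfloor> + 1 - \<lceil>lo / t\<rceil>)) \<le> (hi - lo) / t + 1"
    using assms by (cases "\<lfloor>hi / t\<rfloor> + 1 - \<lceil>lo / t\<rceil> \<ge> 0") (auto simp: divide_nonneg_nonneg)
  with c show "real (card (latt t lo hi)) \<le> (hi - lo) / t + 1" by linarith
qed

lemma convex_bounds:
  fixes l f :: "nat \<Rightarrow> real"
  assumes "\<forall>j\<le>d. 0 \<le> l j" "(\<Sum>j\<le>d. l j) = 1" "\<And>j. j \<le> d \<Longrightarrow> lo \<le> f j \<and> f j \<le> hi"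
  shows "lo \<le> (\<Sum>j\<le>d. l j * f j) \<and> (\<Sum>j\<le>d. l j * f j) \<le> hi"
proof
  have "lo = (\<Sum>j\<le>d. l j * lo)" using assms(2) by (simp add: sum_distrib_right[symmetric])
  also have "\<dots> \<le> (\<Sum>j\<le>d. l j * f j)" using assms by (intro sum_mono mult_left_mono) auto
  finally show "lo \<le> (\<Sum>j\<le>d. l j * f j)" .
  have "(\<Sum>j\<le>d. l j * f j) \<le> (\<Sum>j\<le>d. l j * hi)" using assms by (intro sum_mono mult_left_mono) auto
  also have "\<dots> = hi" using assms(2) by (simp add: sum_distrib_right[symmetric])
  finally show "(\<Sum>j\<le>d. l j * f j) \<le> hi" .
qed

lemma simplex_coord:
  assumes "x \<in> dsimplex d v" "i < d" "\<And>j. j \<le> d \<Longrightarrow> lo \<le> v j i \<and> v j i \<le> hi"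
  shows "lo \<le> x i \<and> x i \<le> hi"
proof -
  obtain l where l: "\<forall>j\<le>d. 0 \<le> l j" "(\<Sum>j\<le>d. l j) = 1" "x i = (\<Sum>j\<le>d. l j * v j i)"
    using assms(1,2) by (auto simp: dsimplex_def)
  show ?thesis using convex_bounds[OF l(1,2), of lo "\<lambda>j. v j i" hi] assms(3) l(3) by simp
qed


lemma sqrt_pow: assumes "d \<ge> 1" shows "sqrt (real d) ^ d = real d powr (real d / 2)"
proof -
  have False: "d \<noteq> 0" using assms by simp
  have "sqrt (real d) ^ d = (real d powr (1/2)) ^ d" by (simp add: powr_half_sqrt)
  also have "\<dots> = real d powr (1/2 * real d)" using False by (simp add: powr_realpow[symmetric] powr_powr)
  finally show ?thesis by simp
qed

lemma real_le_2pow: "real k \<le> (2::real) ^ k"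
proof (induction k)
  case (Suc k)
  have "1 \<le> (2::real)^k" by simp
  moreover have "(2::real)^Suc k = 2 * 2^k" "real (Suc k) = 1 + real k" by simp_all
  ultimately show ?case using Suc.IH by linarith
qed simp

lemma W_bound:
  assumes d: "d \<ge> 1" and "0 < \<delta>" "\<delta> \<le> 1/2"
  shows "(4 * sqrt (real d) / \<delta> + 4) ^ d \<le> 2 * (5 ^ d * real d powr (real d / 2) / \<delta> ^ d)"
proof -
  have "4 * sqrt (real d) / \<delta> + 4 \<le> (4 * sqrt (real d) + 2) / \<delta>"
    using assms by (simp add: field_simps)
  then have "(4 * sqrt (real d) / \<delta> + 4) ^ d \<le> ((4 * sqrt (real d) + 2) / \<delta>) ^ d"
    by (intro power_mono) (use assms in auto)
  also have "\<dots> = (4 * sqrt (real d) + 2) ^ d / \<delta> ^ d" by (simp add: power_divide)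
  also have "(4 * sqrt (real d) + 2) ^ d \<le> 2 * (5 * sqrt (real d)) ^ d"
  proof (cases "d \<ge> 4")
    case True
    then have "2 \<le> sqrt (real d)" by (simp add: real_le_rsqrt)
    then have "(4 * sqrt (real d) + 2) ^ d \<le> (5 * sqrt (real d)) ^ d" by (intro power_mono) auto
    moreover have "0 \<le> (5 * sqrt (real d)) ^ d" by simp
    ultimately show ?thesis by linarith
  next
    case False
    have s1: "1 \<le> sqrt (real d)" using d by simp
    then have "(4 * sqrt (real d) + 2) ^ d \<le> (6 * sqrt (real d)) ^ d" by (intro power_mono) auto
    also have "\<dots> = (6/5 * (5 * sqrt (real d))) ^ d" by simp
    also have "\<dots> = (6/5)^d * (5 * sqrt (real d)) ^ d" by (simp only: power_mult_distrib)
    also have "(6/5)^d * (5 * sqrt (real d)) ^ d \<le> 2 * (5 * sqrt (real d)) ^ d"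
    proof -
      have "(6/5::real)^d \<le> (6/5)^3" using False by (intro power_increasing) auto
      moreover have "(6/5::real)^3 = 216/125" by (simp add: power3_eq_cube)
      ultimately have "(6/5::real)^d \<le> 2" by linarith
      then show ?thesis by (intro mult_right_mono) auto
    qed
    finally show ?thesis .
  qed
  then have "(4 * sqrt (real d) + 2) ^ d / \<delta> ^ d \<le> 2 * (5 * sqrt (real d)) ^ d / \<delta> ^ d"
    using assms by (intro divide_right_mono) auto
  also have "\<dots> = 2 * (5 ^ d * real d powr (real d / 2) / \<delta> ^ d)"
    by (simp add: power_mult_distrib sqrt_pow[OF d])
  finally show ?thesis .
qed

lemma final_arith:
  fixes d n m :: nat and \<delta> X L cQ :: real
  assumes d: "d \<ge> 1" and n: "n \<ge> 1" and m: "m \<ge> 1" and del: "0 < \<delta>" "\<delta> \<le> 1/2"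
    and X: "X \<ge> 1 / \<delta>" and L0: "L \<ge> 0"
    and L: "L \<le> log 2 (X * sqrt (real d) * (1 + \<delta>) / \<delta>) + 1"
    and cQ: "cQ \<le> real m * 4 ^ d + L * real n * (4 * sqrt (real d) / \<delta> + 4) ^ d"
  shows "cQ \<le> 20 * (5 ^ d * real d * real d powr (real d / 2) * real (n * m) / \<delta> ^ d) * ln X"
proof -
  define G where "G = 5 ^ d * real d powr (real d / 2) / \<delta> ^ d"
  have "1 / \<delta> \<ge> 2" using del by (simp add: field_simps)
  then have X2: "X \<ge> 2" using X by linarith
  have ln2: "ln 2 \<ge> (2/3::real)" by (rule ln2_ge_two_thirds)
  have lnX: "ln X \<ge> ln 2" using X2 by simp
  have G0: "G \<ge> 0" unfolding G_def by (intro divide_nonneg_nonneg mult_nonneg_nonneg) (use del in auto)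
  have W: "(4 * sqrt (real d) / \<delta> + 4) ^ d \<le> 2 * G" unfolding G_def by (rule W_bound[OF d del])
  have G4: "4 ^ d \<le> G"
  proof -
    have "(4::real) ^ d \<le> 5 ^ d" by (intro power_mono) auto
    also have "\<dots> \<le> 5 ^ d * real d powr (real d / 2)"
    proof -
      have h: "1 \<le> real d powr (real d / 2)" by (rule ge_one_powr_ge_zero) (use d in auto)
      show ?thesis using mult_left_mono[OF h, of "5^d"] by simp
    qed
    also have "\<dots> \<le> G"
    proof -
      have q: "\<delta>^d \<le> 1" "0 < \<delta>^d" using del by (auto simp: power_le_one)
      have "5^d * real d powr (real d / 2) * \<delta>^d \<le> 5^d * real d powr (real d / 2)"
        using q by (intro mult_left_le) auto
      then show ?thesis using q by (simp add: G_def le_divide_eq)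
    qed
    finally show ?thesis .
  qed
  define Y where "Y = X * sqrt (real d) * (1 + \<delta>) / \<delta>"
  have sd: "sqrt (real d) \<le> 2 ^ d"
  proof -
    have "real d \<le> real d ^ 2" using d by (simp add: power2_eq_square)
    then have "sqrt (real d) \<le> real d" using d by (simp add: real_sqrt_le_iff')
    also have "real d \<le> 2 ^ d" by (rule real_le_2pow)
    finally show ?thesis .
  qed
  have dd: "(1 + \<delta>) / \<delta> \<le> X ^ 2"
  proof -
    have "(1 + \<delta>) / \<delta> = 1 / \<delta> + 1" using del by (simp add: field_simps)
    also have "\<dots> \<le> X + 1" using X by simp
    also have "\<dots> \<le> X ^ 2"
    proof -
      have "X * X \<ge> 2 * X" using X2 by (intro mult_right_mono) auto
      then show ?thesis using X2 unfolding power2_eq_square by linarith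
    qed
    finally show ?thesis .
  qed
  have Ypos: "Y > 0" unfolding Y_def using X2 del d by auto
  have "Y = X * sqrt (real d) * ((1 + \<delta>) / \<delta>)" unfolding Y_def by simp
  also have "\<dots> \<le> X * 2 ^ d * X ^ 2"
    using X2 sd dd del by (intro mult_mono) auto
  finally have YX: "Y \<le> X ^ 3 * 2 ^ d" by (simp add: power2_eq_square power3_eq_cube algebra_simps)
  have "ln Y \<le> ln (X ^ 3 * 2 ^ d)" using YX Ypos by simp
  also have "\<dots> = 3 * ln X + real d * ln 2" using X2 by (simp add: ln_mult ln_realpow)
  also have "\<dots> \<le> 3 * ln X + real d * ln X" using lnX by (intro add_left_mono mult_left_mono) auto
  finally have lnY: "ln Y \<le> (3 + real d) * ln X" by (simp add: algebra_simps)
  have "L \<le> ln Y / ln 2 + 1" using L unfolding Y_def by (simp add: log_def)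
  also have "\<dots> \<le> (3 + real d) * ln X / ln 2 + ln X / ln 2"
    using lnY lnX ln2 by (intro add_mono divide_right_mono) (auto simp: field_simps)
  also have "\<dots> = (4 + real d) * ln X / ln 2" by (simp add: field_simps)
  also have "\<dots> \<le> (5 * real d) * ln X / (2/3)"
    using d lnX ln2 by (intro frac_le mult_right_mono) auto
  finally have Lb0: "L \<le> (5 * real d) * ln X / (2/3)" .
  have nn: "0 \<le> real d * ln X" using lnX ln2 by simp
  have eq: "(5 * real d) * ln X / (2/3) = 15/2 * (real d * ln X)" by simp
  from Lb0 have "L \<le> 15/2 * (real d * ln X)" unfolding eq .
  then have "L \<le> 8 * (real d * ln X)" using nn by linarith
  then have Lb: "L \<le> 8 * real d * ln X" by (simp add: mult.assoc)
  have "cQ \<le> real m * G + (8 * real d * ln X) * real n * (2 * G)"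
    using cQ G4 W Lb L0 G0 del by (intro order.trans[OF cQ] add_mono mult_mono mult_left_mono) auto
  also have "real m * G \<le> real m * G * (real n * real d * (3/2 * ln X))"
  proof -
    have "1 \<le> 3/2 * ln X" using lnX ln2 by linarith
    moreover have "real n \<ge> 1" "real d \<ge> 1" using n d by simp_all
    ultimately have c1: "1 \<le> real n * real d * (3/2 * ln X)"
      using mult_mono[of 1 "real n" 1 "real d"] mult_mono[of 1 "real n * real d" 1 "3/2 * ln X"] by simp
    have "0 \<le> real m * G" using G0 by simp
    then show ?thesis using mult_left_mono[OF c1, of "real m * G"] by simp
  qed
  finally have "cQ \<le> G * real d * (real n * real m) * ln X * (3/2) + G * real d * real n * ln X * 16"
    by (simp add: algebra_simps)
  also have "\<dots> \<le> G * real d * (real n * real m) * ln X * (3/2) + G * real d * (real n * real m) * ln X * 16"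
  proof -
    have nm: "real n \<le> real n * real m" using mult_left_mono[of 1 "real m" "real n"] m by simp
    show ?thesis using nm G0 lnX ln2 by (intro add_left_mono mult_right_mono mult_left_mono) auto
  qed
  also have "\<dots> \<le> 20 * (G * real d * (real n * real m) * ln X)"
    using G0 lnX ln2 by (simp add: algebra_simps) 
  finally show ?thesis unfolding G_def by (simp add: algebra_simps)
qed

lemma main_bound:
  fixes d n m :: nat and p :: "nat \<Rightarrow> nat \<Rightarrow> real" and V :: "nat \<Rightarrow> nat \<Rightarrow> nat \<Rightarrow> real"
    and \<Delta> \<delta> :: real
  assumes d: "d \<ge> 1" and n: "n \<ge> 1" and m: "m \<ge> 1"
    and Vin: "\<forall>k<m. (\<forall>j\<le>d. V k j \<in> RR d)"
    and vol: "(\<Sum>k<m. measure (leb d) (dsimplex d (V k))) = 1"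
    and DM: "\<Delta> = Max {edist d (V k i) (V k j) | k i j. k < m \<and> i \<le> d \<and> j \<le> d}"
    and del: "0 < \<delta>" "\<delta> \<le> 1/2"
  shows "finite (cells_Q d \<Delta> \<delta> n m p V) \<and> real (card (cells_Q d \<Delta> \<delta> n m p V))
        \<le> 20 * (5 ^ d * real d * real d powr (real d / 2) * real (n * m) / \<delta> ^ d)
            * ln ((real (n * m)) powr (1 / real d) * \<Delta> / \<delta>)"
proof -
  define E where "E = {edist d (V k i) (V k j) | k i j. k < m \<and> i \<le> d \<and> j \<le> d}"
  have E_eq: "E \<subseteq> (\<lambda>(k,i,j). edist d (V k i) (V k j)) ` ({..<m} \<times> {..d} \<times> {..d})"
    unfolding E_def apply clarsimp apply (rule_tac x="(k,i,j)" in rev_image_eqI) by auto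
  have Efin: "finite E" by (rule finite_subset[OF E_eq]) simp
  have DM': "\<Delta> = Max E" using DM E_def by simp
  have edge: "edist d (V k i) (V k j) \<le> \<Delta>" if "k < m" "i \<le> d" "j \<le> d" for k i j
  proof -
    have "edist d (V k i) (V k j) \<in> E" unfolding E_def using that by blast
    then show ?thesis using Max_ge[OF Efin] DM' by simp
  qed
  have D0: "\<Delta> \<ge> 0" using edge[of 0 0 0] m edist_nonneg[of d "V 0 0" "V 0 0"] by simp
  have cdiff: "\<bar>V k j i - V k j' i\<bar> \<le> \<Delta>" if "k < m" "j \<le> d" "j' \<le> d" "i < d" for k j j' i
    using coord_le_edist[OF that(4), of "V k j" "V k j'"] edge[OF that(1-3)] by simp
  have mb: "measure (leb d) (dsimplex d (V k)) \<le> \<Delta> ^ d" if k: "k < m" for k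
  proof -
    define lo where "lo i = Min ((\<lambda>j. V k j i) ` {..d})" for i
    have "dsimplex d (V k) \<subseteq> PiE {..<d} (\<lambda>i. {lo i .. lo i + \<Delta>})"
    proof
      fix x assume x: "x \<in> dsimplex d (V k)"
      have "x i \<in> {lo i .. lo i + \<Delta>}" if i: "i < d" for i
      proof -
        have "lo i \<in> (\<lambda>j. V k j i) ` {..d}" unfolding lo_def by (intro Min_in) auto
        then obtain j0 where j0: "j0 \<le> d" "lo i = V k j0 i" by auto
        have "lo i \<le> V k j i \<and> V k j i \<le> lo i + \<Delta>" if "j \<le> d" for j
        proof
          show "lo i \<le> V k j i" unfolding lo_def using that by (intro Min_le) auto
          show "V k j i \<le> lo i + \<Delta>" using cdiff[OF k that j0(1) i] j0(2) by linarith
        qed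
        then show ?thesis using simplex_coord[OF x i] by auto
      qed
      moreover have "x \<in> extensional {..<d}" using x by (auto simp: dsimplex_def RR_def PiE_iff)
      ultimately show "x \<in> PiE {..<d} (\<lambda>i. {lo i .. lo i + \<Delta>})" by (auto simp: PiE_iff)
    qed
    then show ?thesis using measure_le_box D0 by blast
  qed
  have vol1: "1 \<le> real m * \<Delta> ^ d"
  proof -
    have "1 = (\<Sum>k<m. measure (leb d) (dsimplex d (V k)))" using vol by simp
    also have "\<dots> \<le> (\<Sum>k<m. \<Delta> ^ d)" using mb by (intro sum_mono) auto
    finally show ?thesis by simp
  qed
  have Dpos: "\<Delta> > 0"
  proof (rule ccontr)
    assume "\<not> \<Delta> > 0" then have "\<Delta> = 0" using D0 by simp
    then show False using vol1 d by (simp add: power_0_left)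
  qed
  define A where "A = real (n * m) powr (1 / real d)"
  have "1 \<le> n * m" using n m by simp
  then have nm1: "real (n * m) \<ge> 1" by (metis of_nat_1 of_nat_le_iff)
  have Apos: "A > 0" unfolding A_def powr_gt_zero using nm1 by linarith
  have Ad: "A ^ d = real (n * m)"
  proof -
    have "A ^ d = A powr real d" using Apos by (simp add: powr_realpow)
    also have "\<dots> = real (n * m)" unfolding A_def using d nm1 by (simp add: powr_powr)
    finally show ?thesis .
  qed
  have AD1: "A * \<Delta> \<ge> 1"
  proof -
    have "(A * \<Delta>) ^ d = real (n * m) * \<Delta> ^ d" by (simp add: power_mult_distrib Ad)
    also have "\<dots> \<ge> real m * \<Delta> ^ d"
    proof -
      have mr: "real m \<le> real (n * m)" using mult_right_mono[of 1 "real n" "real m"] n by simp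
      show ?thesis using mult_right_mono[OF mr, of "\<Delta>^d"] D0 by simp
    qed
    finally have "1 ^ d \<le> (A * \<Delta>) ^ d" using vol1 by simp
    then show ?thesis using Apos D0 d by (subst (asm) power_mono_iff) auto
  qed
  define X where "X = A * \<Delta> / \<delta>"
  have Xd: "X \<ge> 1 / \<delta>" unfolding X_def using AD1 del by (intro divide_right_mono) auto
  have X2: "X \<ge> 2"
  proof -
    have "1 / \<delta> \<ge> 2" using del by (simp add: field_simps)
    then show ?thesis using Xd by linarith
  qed
  define Y where "Y = X * sqrt (real d) * (1 + \<delta>) / \<delta>"
  have Y1: "Y \<ge> 1"
  proof -
    have "X * 1 * 1 \<le> X * sqrt (real d) * ((1 + \<delta>) / \<delta>)"
      using X2 d del by (intro mult_mono) (auto simp: field_simps)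
    then show ?thesis unfolding Y_def using X2 by simp
  qed
  define Lv where "Lv = {k::nat. \<delta> * (\<delta> / real (n * m) powr (1 / real d)) < \<Delta> / 2^k * sqrt (real d) * (1 + \<delta>)}"
  define t where "t k = \<Delta> / 2^(Suc k)" for k
  define r where "r k = 2 * t k * sqrt (real d) / \<delta>" for k
  define Init where "Init = (\<Union>kk<m. (\<lambda>a. (a, \<Delta>)) ` PiE {..<d} (\<lambda>i. latt \<Delta> (V kk 0 i - 2*\<Delta>) (V kk 0 i + \<Delta>)))"
  define Nb where "Nb k j = (\<lambda>b. (b, t k)) ` PiE {..<d} (\<lambda>i. latt (t k) (p j i - r k - 2 * t k) (p j i + r k + t k))" for k j
  have subset: "cells_Q d \<Delta> \<delta> n m p V \<subseteq> Init \<union> (\<Union>k\<in>Lv. \<Union>j<n. Nb k j)"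
  proof
    fix c assume c: "c \<in> cells_Q d \<Delta> \<delta> n m p V"
    then have R: "reached d \<Delta> \<delta> n m p V c" by (simp add: cells_Q_def)
    from R show "c \<in> Init \<union> (\<Union>k\<in>Lv. \<Union>j<n. Nb k j)"
    proof (cases rule: reached.cases)
      case (init a)
      then obtain kk x where kk: "kk < m" "x \<in> dcube d a \<Delta>" "x \<in> dsimplex d (V kk)" by blast
      have "a \<in> PiE {..<d} (\<lambda>i. latt \<Delta> (V kk 0 i - 2*\<Delta>) (V kk 0 i + \<Delta>))"
        unfolding PiE_iff
      proof
        show "\<forall>i\<in>{..<d}. a i \<in> latt \<Delta> (V kk 0 i - 2*\<Delta>) (V kk 0 i + \<Delta>)"
        proof
          fix i assume i: "i \<in> {..<d}"
          have "V kk 0 i - \<Delta> \<le> V kk j i \<and> V kk j i \<le> V kk 0 i + \<Delta>" if "j \<le> d" for j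
            using cdiff[OF kk(1) that _, of 0 i] i by (auto simp: abs_le_iff)
          then have xb: "V kk 0 i - \<Delta> \<le> x i \<and> x i \<le> V kk 0 i + \<Delta>"
            using simplex_coord[OF kk(3)] i by auto
          have ab: "a i \<le> x i \<and> x i \<le> a i + \<Delta>" using kk(2) i by (auto simp: dcube_def PiE_iff)
          obtain z::int where z: "a i = of_int z * \<Delta>" using init i by blast
          show "a i \<in> latt \<Delta> (V kk 0 i - 2*\<Delta>) (V kk 0 i + \<Delta>)"
            unfolding latt_def using xb ab z by auto
        qed
        show "a \<in> extensional {..<d}" using init by (simp add: RR_def PiE_iff)
      qed
      then show ?thesis using init kk(1) unfolding Init_def by blast
    next
      case (sub a s b)
      obtain k where k: "s = \<Delta> / 2^k" "a \<in> RR d" using reached_level[OF sub(2)] by auto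
      have bl: "\<forall>i<d. \<exists>z::int. b i = of_int z * (s/2)" using reached_level[OF R] sub(1) by auto
      have s0: "s > 0" using k Dpos by simp
      obtain j x where jx: "j < n" "x \<in> dcube d a s" "edist d (p j) x < s * sqrt d / \<delta>"
        using nonstop_near[OF k(2) _ del(1) sub(3)] s0 by force
      have kLv: "k \<in> Lv"
      proof (rule ccontr)
        assume "k \<notin> Lv"
        then have "s * sqrt d * (1 + \<delta>) \<le> \<delta> * (\<delta> / real (n * m) powr (1 / real d))"
          unfolding Lv_def k(1) by (simp add: not_less)
        then have "stop_cell d \<delta> n m p (a, s)" using small_stop[OF k(2) _ del(1)] s0 by simp
        then show False using sub(3) by simp
      qed
      have ts: "t k = s / 2" unfolding t_def k(1) by simp
      have rs: "r k = s * sqrt d / \<delta>" unfolding r_def ts by simp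
      have "b \<in> PiE {..<d} (\<lambda>i. latt (t k) (p j i - r k - 2 * t k) (p j i + r k + t k))"
        unfolding PiE_iff
      proof
        show "\<forall>i\<in>{..<d}. b i \<in> latt (t k) (p j i - r k - 2 * t k) (p j i + r k + t k)"
        proof
          fix i assume i: "i \<in> {..<d}"
          have px: "\<bar>p j i - x i\<bar> < r k" using coord_le_edist[of i d "p j" x] jx(3) rs i by simp
          have ax: "a i \<le> x i \<and> x i \<le> a i + s" using jx(2) i by (auto simp: dcube_def PiE_iff)
          have ba: "a i \<le> b i \<and> b i \<le> a i + s/2" using sub(5) i s0 by auto
          obtain z::int where z: "b i = of_int z * (s/2)" using bl i by blast
          have lo: "p j i - r k - 2 * t k \<le> b i" using px ax ba ts by (simp add: abs_less_iff)
          have hi: "b i \<le> p j i + r k + t k" using px ax ba ts by (simp add: abs_less_iff)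
          show "b i \<in> latt (t k) (p j i - r k - 2 * t k) (p j i + r k + t k)"
            unfolding latt_def using lo hi z ts by auto
        qed
        show "b \<in> extensional {..<d}" using sub(4) by (simp add: RR_def PiE_iff)
      qed
      then have "(b, t k) \<in> Nb k j" unfolding Nb_def by (rule imageI)
      then have "c \<in> Nb k j" using sub(1) ts by simp
      then show ?thesis using kLv jx(1) by blast
    qed
  qed
  have cInit1: "finite (PiE {..<d} (\<lambda>i. latt \<Delta> (V kk 0 i - 2*\<Delta>) (V kk 0 i + \<Delta>)))
      \<and> card (PiE {..<d} (\<lambda>i. latt \<Delta> (V kk 0 i - 2*\<Delta>) (V kk 0 i + \<Delta>))) \<le> 4 ^ d" for kk
  proof
    show "finite (PiE {..<d} (\<lambda>i. latt \<Delta> (V kk 0 i - 2*\<Delta>) (V kk 0 i + \<Delta>)))"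
      using latt_card(1)[OF Dpos] D0 by (intro finite_PiE) auto
    have "card (latt \<Delta> (V kk 0 i - 2*\<Delta>) (V kk 0 i + \<Delta>)) \<le> 4" for i
    proof -
      have "real (card (latt \<Delta> (V kk 0 i - 2*\<Delta>) (V kk 0 i + \<Delta>))) \<le> (V kk 0 i + \<Delta> - (V kk 0 i - 2*\<Delta>)) / \<Delta> + 1"
        by (rule latt_card(2)[OF Dpos]) (use D0 in linarith)
      also have "\<dots> = 4" using Dpos by (simp add: field_simps)
      finally show ?thesis by simp
    qed
    then have "(\<Prod>i<d. card (latt \<Delta> (V kk 0 i - 2*\<Delta>) (V kk 0 i + \<Delta>))) \<le> (\<Prod>i<d. 4)"
      by (intro prod_mono) auto
    then show "card (PiE {..<d} (\<lambda>i. latt \<Delta> (V kk 0 i - 2*\<Delta>) (V kk 0 i + \<Delta>))) \<le> 4 ^ d"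
      by (simp add: card_PiE)
  qed
  have finInit: "finite Init" unfolding Init_def using cInit1 by auto
  have cardInit: "card Init \<le> m * 4 ^ d"
  proof -
    have "card Init \<le> (\<Sum>kk<m. card ((\<lambda>a. (a, \<Delta>)) ` PiE {..<d} (\<lambda>i. latt \<Delta> (V kk 0 i - 2*\<Delta>) (V kk 0 i + \<Delta>))))"
      unfolding Init_def by (rule card_UN_le) simp
    also have "\<dots> \<le> (\<Sum>kk<m. 4 ^ d)"
      using cInit1 by (intro sum_mono order.trans[OF card_image_le]) auto
    finally show ?thesis by simp
  qed
  have tpos: "t k > 0" for k unfolding t_def using Dpos by simp
  have rt: "r k / t k = 2 * sqrt (real d) / \<delta>" for k
    unfolding r_def using tpos[of k] by simp
  have cNb: "finite (Nb k j) \<and> real (card (Nb k j)) \<le> (4 * sqrt (real d) / \<delta> + 4) ^ d" for k j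
  proof
    have r0: "r k \<ge> 0" unfolding r_def using tpos[of k] del by simp
    have lh: "p j i - r k - 2 * t k \<le> p j i + r k + t k" for i using r0 tpos[of k] by simp
    show "finite (Nb k j)" unfolding Nb_def using latt_card(1)[OF tpos lh] by (intro finite_imageI finite_PiE) auto
    have ci: "real (card (latt (t k) (p j i - r k - 2 * t k) (p j i + r k + t k))) \<le> 4 * sqrt (real d) / \<delta> + 4" for i
    proof -
      have "real (card (latt (t k) (p j i - r k - 2 * t k) (p j i + r k + t k))) \<le> (p j i + r k + t k - (p j i - r k - 2 * t k)) / t k + 1"
        by (rule latt_card(2)[OF tpos lh])
      also have "\<dots> = 2 * (r k / t k) + 4" using tpos[of k] by (simp add: field_simps)
      also have "\<dots> = 4 * sqrt (real d) / \<delta> + 4" unfolding rt by simp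
      finally show ?thesis .
    qed
    have "real (card (Nb k j)) \<le> real (card (PiE {..<d} (\<lambda>i. latt (t k) (p j i - r k - 2 * t k) (p j i + r k + t k))))"
    proof -
      have finP: "finite (PiE {..<d} (\<lambda>i. latt (t k) (p j i - r k - 2 * t k) (p j i + r k + t k)))"
        using latt_card(1)[OF tpos lh] by (intro finite_PiE) auto
      show ?thesis unfolding Nb_def using card_image_le[OF finP] by simp
    qed
    also have "\<dots> = (\<Prod>i<d. real (card (latt (t k) (p j i - r k - 2 * t k) (p j i + r k + t k))))"
      by (simp add: card_PiE)
    also have "\<dots> \<le> (\<Prod>i<d. 4 * sqrt (real d) / \<delta> + 4)"
      using ci by (intro prod_mono) auto
    finally show "real (card (Nb k j)) \<le> (4 * sqrt (real d) / \<delta> + 4) ^ d" by simp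
  qed
  define N where "N = nat \<lceil>log 2 Y\<rceil>"
  have LvN: "Lv \<subseteq> {..<N}"
  proof
    fix k assume "k \<in> Lv"
    then have h: "\<delta> * (\<delta> / A) < \<Delta> / 2^k * sqrt (real d) * (1 + \<delta>)" unfolding Lv_def A_def by simp
    have "2^k * (\<delta> * (\<delta> / A)) < 2^k * (\<Delta> / 2^k * sqrt (real d) * (1 + \<delta>))"
      using h by (intro mult_strict_left_mono) auto
    also have "2^k * (\<Delta> / 2^k * sqrt (real d) * (1 + \<delta>)) = \<Delta> * sqrt (real d) * (1 + \<delta>)" by simp
    finally have "2^k * (\<delta> * \<delta>) < \<Delta> * sqrt (real d) * (1 + \<delta>) * A" using Apos by (simp add: field_simps)
    then have "(2::real)^k < Y" unfolding Y_def X_def using del Apos by (simp add: field_simps)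
    then have "2 powr real k < Y" by (simp add: powr_realpow)
    then have "real k < log 2 Y" using Y1 by (subst less_log_iff) auto
    then have "real k < real_of_int \<lceil>log 2 Y\<rceil>" using le_of_int_ceiling[of "log 2 Y"] by linarith
    then have "int k < \<lceil>log 2 Y\<rceil>" by (metis of_int_less_iff of_int_of_nat_eq)
    then show "k \<in> {..<N}" unfolding N_def by simp
  qed
  have finLv: "finite Lv" using LvN finite_subset by blast
  have cardLv: "real (card Lv) \<le> log 2 Y + 1"
  proof -
    have "card Lv \<le> N" using card_mono[OF _ LvN] by simp
    moreover have "log 2 Y \<ge> 0" using Y1 by simp
    then have "real N \<le> log 2 Y + 1" unfolding N_def by simp
    ultimately show ?thesis by linarith
  qed
  define W where "W = (4 * sqrt (real d) / \<delta> + 4) ^ d"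
  have finU: "finite (Init \<union> (\<Union>k\<in>Lv. \<Union>j<n. Nb k j))" using finInit finLv cNb by auto
  have finQ: "finite (cells_Q d \<Delta> \<delta> n m p V)" using finite_subset[OF subset finU] .
  have "card (cells_Q d \<Delta> \<delta> n m p V) \<le> card (Init \<union> (\<Union>k\<in>Lv. \<Union>j<n. Nb k j))"
    by (rule card_mono[OF finU subset])
  also have "\<dots> \<le> card Init + card (\<Union>k\<in>Lv. \<Union>j<n. Nb k j)" by (rule card_Un_le)
  also have "card (\<Union>k\<in>Lv. \<Union>j<n. Nb k j) \<le> (\<Sum>k\<in>Lv. card (\<Union>j<n. Nb k j))"
    by (rule card_UN_le[OF finLv])
  also have "\<dots> \<le> (\<Sum>k\<in>Lv. \<Sum>j<n. card (Nb k j))"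
    by (intro sum_mono card_UN_le) auto
  finally have c1: "real (card (cells_Q d \<Delta> \<delta> n m p V)) \<le> real (card Init) + (\<Sum>k\<in>Lv. \<Sum>j<n. real (card (Nb k j)))"
    by (simp add: of_nat_sum[symmetric] del: of_nat_sum)
  have c2: "(\<Sum>k\<in>Lv. \<Sum>j<n. real (card (Nb k j))) \<le> (\<Sum>k\<in>Lv. \<Sum>j<n. W)"
    unfolding W_def using cNb by (intro sum_mono) auto
  have c3: "real (card Init) \<le> real m * 4 ^ d" using of_nat_mono[OF cardInit] by simp
  have cQ: "real (card (cells_Q d \<Delta> \<delta> n m p V)) \<le> real m * 4 ^ d + real (card Lv) * real n * W"
    using c1 c2 c3 by simp
  have "real (card (cells_Q d \<Delta> \<delta> n m p V)) \<le> 20 * (5 ^ d * real d * real d powr (real d / 2) * real (n * m) / \<delta> ^ d) * ln X"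
    by (rule final_arith[OF d n m del Xd _ _ cQ[unfolded W_def]]) (use cardLv in \<open>auto simp: Y_def\<close>)
  moreover have "X = (real (n * m)) powr (1 / real d) * \<Delta> / \<delta>" unfolding X_def A_def by simp
  ultimately show ?thesis using finQ by simp
qed


theorem lemma19:
  shows "\<exists>C>0. \<forall>(d::nat) (n::nat) (m::nat) (p::nat \<Rightarrow> nat \<Rightarrow> real) (w::nat \<Rightarrow> real)
      (V::nat \<Rightarrow> nat \<Rightarrow> nat \<Rightarrow> real) (\<Delta>::real) (\<delta>::real).
     d \<ge> 1 \<and> n \<ge> 1 \<and> m \<ge> 1
   \<and> (\<forall>k<n. p k \<in> RR d) \<and> inj_on p {..<n}
   \<and> (\<forall>k<n. w k > 0) \<and> (\<Sum>k<n. w k) = 1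
   \<and> (\<forall>k<m. (\<forall>j\<le>d. V k j \<in> RR d) \<and> aff_indep d (V k))
   \<and> inj_on (\<lambda>k. dsimplex d (V k)) {..<m}
   \<and> (\<Sum>k<m. measure (leb d) (dsimplex d (V k))) = 1
   \<and> \<Delta> = Max {edist d (V k i) (V k j) | k i j. k < m \<and> i \<le> d \<and> j \<le> d}
   \<and> 0 < \<delta> \<and> \<delta> \<le> 1 / 2
   \<longrightarrow> finite (cells_Q d \<Delta> \<delta> n m p V)
     \<and> real (card (cells_Q d \<Delta> \<delta> n m p V))
        \<le> C * (5 ^ d * real d * real d powr (real d / 2) * real (n * m) / \<delta> ^ d)
            * ln ((real (n * m)) powr (1 / real d) * \<Delta> / \<delta>)"
    apply (rule exI[of _ 20])
  apply (rule conjI)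
   apply simp
  apply (intro allI impI)
  apply (elim conjE)
  apply (rule main_bound)
  apply (assumption | blast)+
  done

end
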